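(* Let $Y_1,\ldots,Y_n\in L_2(\mathcal{I})$ and let $p$ be an integer with $1\le p<n$. Let $\hat K$ be the operator and $K^*$ the $(n-p)\times(n-p)$ matrix defined in the context. Then $\hat K$ and $K^*$ have the same nonzero eigenvalues. Moreover, if $\hat\theta\neq0$ is an eigenvalue of $K^*$ with eigenvector $\gamma=(\gamma_1,\ldots,\gamma_{n-p})'$, then the function $\hat\psi(\cdot)=\sum_{t=1}^{n-p}\gamma_t\{Y_t(\cdot)-\bar Y(\cdot)\}$ satisfies $\hat K\hat\psi=\hat\theta\,\hat\psi$, i.e. it is an eigenfunction of $\hat K$ for the eigenvalue $\hat\theta$.
   Context: $\mathcal{I}$ is a compact interval, $L_2(\mathcal{I})$ has inner product $\langle f,g\rangle=\int_{\mathcal{I}}fg$, and a kernel $L(u,v)$ acts as the integral operator $(Lg)(u)=\int_{\mathcal{I}}L(u,v)g(v)\,dv$. Put $\bar Y=n^{-1}\sum_{j=1}^nY_j$, and for $k=1,\ldots,p$, $\hat M_k(u,v)=\frac{1}{n-p}\sum_{j=1}^{n-p}\{Y_j(u)-\bar Y(u)\}\{Y_{j+k}(v)-\bar Y(v)\}$ and $\hat K(u,v)=\sum_{k=1}^p\int_{\mathcal{I}}\hat M_k(u,z)\hat M_k(v,z)\,dz$. For $k=0,1,\ldots,p$ let $G_k$ be the $(n-p)\times(n-p)$ matrix with $(t,s)$ entry $\langle Y_{t+k}-\bar Y,\,Y_{s+k}-\bar Y\rangle$, and define $K^*=(n-p)^{-2}\sum_{k=1}^pG_kG_0$. *)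

theory Defs
  imports "HOL-Analysis.Analysis" "Jordan_Normal_Form.Char_Poly"
begin

definition L2_on :: "real set \<Rightarrow> (real \<Rightarrow> real) \<Rightarrow> bool" where
  "L2_on I f \<longleftrightarrow> f \<in> borel_measurable (lebesgue_on I)
     \<and> integrable (lebesgue_on I) (\<lambda>x. (f x)\<^sup>2)"

definition inner_L2 :: "real set \<Rightarrow> (real \<Rightarrow> real) \<Rightarrow> (real \<Rightarrow> real) \<Rightarrow> real" where
  "inner_L2 I f g = (LINT x|lebesgue_on I. f x * g x)"

definition kop :: "real set \<Rightarrow> (real \<Rightarrow> real \<Rightarrow> real) \<Rightarrow> (real \<Rightarrow> real) \<Rightarrow> real \<Rightarrow> real" where
  "kop I L g u = (LINT v|lebesgue_on I. L u v * g v)"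

definition op_eigenvalue :: "real set \<Rightarrow> (real \<Rightarrow> real \<Rightarrow> real) \<Rightarrow> real \<Rightarrow> bool" where
  "op_eigenvalue I L \<theta> \<longleftrightarrow> (\<exists>g. L2_on I g \<and> \<not> (AE x in lebesgue_on I. g x = 0)
       \<and> (AE u in lebesgue_on I. kop I L g u = \<theta> * g u))"

definition Ybar :: "(nat \<Rightarrow> real \<Rightarrow> real) \<Rightarrow> nat \<Rightarrow> real \<Rightarrow> real" where
  "Ybar Y n u = (\<Sum>j=1..n. Y j u) / real n"

definition Mhat :: "real set \<Rightarrow> (nat \<Rightarrow> real \<Rightarrow> real) \<Rightarrow> nat \<Rightarrow> nat \<Rightarrow> nat \<Rightarrow> real \<Rightarrow> real \<Rightarrow> real" where
  "Mhat I Y n p k u v = (1 / real (n - p)) *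
     (\<Sum>j=1..n-p. (Y j u - Ybar Y n u) * (Y (j + k) v - Ybar Y n v))"

definition Khat :: "real set \<Rightarrow> (nat \<Rightarrow> real \<Rightarrow> real) \<Rightarrow> nat \<Rightarrow> nat \<Rightarrow> real \<Rightarrow> real \<Rightarrow> real" where
  "Khat I Y n p u v = (\<Sum>k=1..p. LINT z|lebesgue_on I. Mhat I Y n p k u z * Mhat I Y n p k v z)"

text \<open>G_k as an (n-p) x (n-p) matrix; JNF matrices are 0-indexed, so entry (i,j)
  is the paper's entry (t,s) = (i+1, j+1).\<close>

definition Gmat :: "real set \<Rightarrow> (nat \<Rightarrow> real \<Rightarrow> real) \<Rightarrow> nat \<Rightarrow> nat \<Rightarrow> nat \<Rightarrow> real mat" where
  "Gmat I Y n p k = mat (n - p) (n - p) (\<lambda>(i, j).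
     inner_L2 I (\<lambda>u. Y (i + 1 + k) u - Ybar Y n u) (\<lambda>u. Y (j + 1 + k) u - Ybar Y n u))"

definition Kstar :: "real set \<Rightarrow> (nat \<Rightarrow> real \<Rightarrow> real) \<Rightarrow> nat \<Rightarrow> nat \<Rightarrow> real mat" where
  "Kstar I Y n p = mat (n - p) (n - p) (\<lambda>(i, j).
     (1 / (real (n - p))\<^sup>2) * (\<Sum>k\<in>{1..p}. (Gmat I Y n p k * Gmat I Y n p 0) $$ (i, j)))"

end

theory Submission
  imports Defs
begin


definition L2M :: "'a measure \<Rightarrow> ('a \<Rightarrow> real) \<Rightarrow> bool" where
  "L2M M f \<longleftrightarrow> f \<in> borel_measurable M \<and> integrable M (\<lambda>x. (f x)\<^sup>2)"

lemma L2_on_eq: "L2_on I f = L2M (lebesgue_on I) f"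
  by (simp add: L2_on_def L2M_def)

lemma L2M_prod_int:
  assumes "L2M M f" "L2M M g"
  shows "integrable M (\<lambda>x. f x * g x)"
proof (rule Bochner_Integration.integrable_bound[where f="\<lambda>x. (f x)\<^sup>2 + (g x)\<^sup>2"])
  show "integrable M (\<lambda>x. (f x)\<^sup>2 + (g x)\<^sup>2)" using assms by (auto simp: L2M_def)
  show "(\<lambda>x. f x * g x) \<in> borel_measurable M" using assms by (auto simp: L2M_def)
  show "AE x in M. norm (f x * g x) \<le> norm ((f x)\<^sup>2 + (g x)\<^sup>2)"
  proof (rule AE_I2)
    fix x
    have "0 \<le> (\<bar>f x\<bar> - \<bar>g x\<bar>)\<^sup>2" by simp
    hence h: "2 * (\<bar>f x\<bar> * \<bar>g x\<bar>) \<le> (f x)\<^sup>2 + (g x)\<^sup>2" by (simp add: power2_eq_square algebra_simps)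
    have h0: "0 \<le> \<bar>f x\<bar> * \<bar>g x\<bar>" by simp
    have e1: "norm (f x * g x) = \<bar>f x\<bar> * \<bar>g x\<bar>" by (simp add: abs_mult)
    have e2: "norm ((f x)\<^sup>2 + (g x)\<^sup>2) = (f x)\<^sup>2 + (g x)\<^sup>2" by simp
    show "norm (f x * g x) \<le> norm ((f x)\<^sup>2 + (g x)\<^sup>2)"
      unfolding e1 e2 using h h0 by linarith
  qed
qed

lemma L2M_add:
  assumes "L2M M f" "L2M M g"
  shows "L2M M (\<lambda>x. f x + g x)"
  unfolding L2M_def
proof
  show "(\<lambda>x. f x + g x) \<in> borel_measurable M" using assms by (auto simp: L2M_def)
  show "integrable M (\<lambda>x. (f x + g x)\<^sup>2)"
  proof -
    have "integrable M (\<lambda>x. (f x)\<^sup>2 + 2 * (f x * g x) + (g x)\<^sup>2)"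
      using assms L2M_prod_int[OF assms] by (auto simp: L2M_def)
    moreover have "(\<lambda>x. (f x + g x)\<^sup>2) = (\<lambda>x. (f x)\<^sup>2 + 2 * (f x * g x) + (g x)\<^sup>2)"
      by (simp add: power2_sum algebra_simps)
    ultimately show ?thesis by simp
  qed
qed

lemma L2M_scale:
  assumes "L2M M f"
  shows "L2M M (\<lambda>x. c * f x)"
  using assms unfolding L2M_def by (auto simp: power_mult_distrib)

lemma L2M_zero: "L2M M (\<lambda>x. 0)"
  by (simp add: L2M_def)

lemma L2M_sum:
  assumes "\<And>i. i \<in> S \<Longrightarrow> L2M M (f i)"
  shows "L2M M (\<lambda>x. \<Sum>i\<in>S. f i x)"
  using assms
proof (induction S rule: infinite_finite_induct)
  case (infinite A) then show ?case by (simp add: L2M_zero)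
next
  case empty then show ?case by (simp add: L2M_zero)
next
  case (insert x F) then show ?case by (simp add: L2M_add)
qed

lemma L2M_diff:
  assumes "L2M M f" "L2M M g"
  shows "L2M M (\<lambda>x. f x - g x)"
  using L2M_add[OF assms(1) L2M_scale[OF assms(2), of "-1"]] by simp



lemma sum_shift1: "(\<Sum>j=1..m. f j) = (\<Sum>i<m. f (Suc i) :: 'b::comm_monoid_add)"
  by (induction m) (auto simp: atLeast0_atMost_Suc sum.atLeast_Suc_atMost_Suc_shift)

lemma int_double_sum:
  fixes h :: "'i \<Rightarrow> 'j \<Rightarrow> 'a \<Rightarrow> real"
  assumes "\<And>i l. i \<in> A \<Longrightarrow> l \<in> B \<Longrightarrow> integrable M (h i l)"
  shows "(integral\<^sup>L M (\<lambda>z. \<Sum>i\<in>A. \<Sum>l\<in>B. c i l * h i l z)) = (\<Sum>i\<in>A. \<Sum>l\<in>B. c i l * integral\<^sup>L M (h i l))"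
proof -
  have "(integral\<^sup>L M (\<lambda>z. \<Sum>i\<in>A. \<Sum>l\<in>B. c i l * h i l z)) = (\<Sum>i\<in>A. integral\<^sup>L M (\<lambda>z. \<Sum>l\<in>B. c i l * h i l z))"
    by (rule Bochner_Integration.integral_sum) (auto intro!: integrable_sum integrable_mult_right assms)
  also have "\<dots> = (\<Sum>i\<in>A. \<Sum>l\<in>B. c i l * integral\<^sup>L M (h i l))"
  proof (rule sum.cong[OF refl])
    fix i assume i: "i \<in> A"
    have "(integral\<^sup>L M (\<lambda>z. \<Sum>l\<in>B. c i l * h i l z)) = (\<Sum>l\<in>B. integral\<^sup>L M (\<lambda>z. c i l * h i l z))"
      by (rule Bochner_Integration.integral_sum) (auto intro!: integrable_mult_right assms i)
    thus "(integral\<^sup>L M (\<lambda>z. \<Sum>l\<in>B. c i l * h i l z)) = (\<Sum>l\<in>B. c i l * integral\<^sup>L M (h i l))" by simp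
  qed
  finally show ?thesis .
qed

definition Xf :: "(nat \<Rightarrow> real \<Rightarrow> real) \<Rightarrow> nat \<Rightarrow> nat \<Rightarrow> real \<Rightarrow> real" where
  "Xf Y n t u = Y t u - Ybar Y n u"

context
  fixes I :: "real set" and Y :: "nat \<Rightarrow> real \<Rightarrow> real" and n p :: nat
  assumes hY: "\<forall>j\<in>{1..n}. L2_on I (Y j)" and hp: "p < n"
begin

lemma L2_X: assumes "1 \<le> t" "t \<le> n" shows "L2M (lebesgue_on I) (Xf Y n t)"
proof -
  have a: "\<And>j. j \<in> {1..n} \<Longrightarrow> L2M (lebesgue_on I) (Y j)" using hY by (simp add: L2_on_eq)
  have "L2M (lebesgue_on I) (\<lambda>u. (1 / real n) * (\<Sum>j=1..n. Y j u))"
    by (intro L2M_scale L2M_sum a)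
  hence "L2M (lebesgue_on I) (Ybar Y n)" by (simp add: Ybar_def[abs_def])
  hence "L2M (lebesgue_on I) (\<lambda>u. Y t u - Ybar Y n u)" using a assms
    by (intro L2M_diff) auto
  thus ?thesis by (simp add: Xf_def[abs_def])
qed

lemma int_XX: assumes "1 \<le> s" "s \<le> n" "1 \<le> t" "t \<le> n"
  shows "integrable (lebesgue_on I) (\<lambda>z. Xf Y n s z * Xf Y n t z)"
  using L2M_prod_int[OF L2_X L2_X] assms by auto

lemma Gmat_idx: assumes "i < n - p" "l < n - p"
  shows "Gmat I Y n p k $$ (i, l) = inner_L2 I (Xf Y n (i+1+k)) (Xf Y n (l+1+k))"
  using assms by (simp add: Gmat_def Xf_def[abs_def])

lemma Mhat_eq: "Mhat I Y n p k u z = (1 / real (n-p)) * (\<Sum>i<n-p. Xf Y n (Suc i) u * Xf Y n (Suc i + k) z)"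
  unfolding Mhat_def Xf_def sum_shift1 by simp

lemma Khat_eq:
  "Khat I Y n p u v = (\<Sum>k\<in>{1..p}. \<Sum>i<n-p. \<Sum>l<n-p.
      ((1 / real (n-p))\<^sup>2 * (Xf Y n (Suc i) u * Xf Y n (Suc l) v)) * Gmat I Y n p k $$ (i, l))"
  unfolding Khat_def
proof (rule sum.cong[OF refl])
  fix k assume k: "k \<in> {1..p}"
  let ?m = "n - p"
  have pr: "Mhat I Y n p k u z * Mhat I Y n p k v z = (\<Sum>i<?m. \<Sum>l<?m.
      ((1 / real ?m)\<^sup>2 * (Xf Y n (Suc i) u * Xf Y n (Suc l) v)) * (Xf Y n (Suc i + k) z * Xf Y n (Suc l + k) z))" for z
  proof -
    have "Mhat I Y n p k u z * Mhat I Y n p k v z = (1 / real ?m)\<^sup>2 *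
      ((\<Sum>i<?m. Xf Y n (Suc i) u * Xf Y n (Suc i + k) z) * (\<Sum>l<?m. Xf Y n (Suc l) v * Xf Y n (Suc l + k) z))"
      unfolding Mhat_eq by (simp add: power2_eq_square)
    also have "\<dots> = (1 / real ?m)\<^sup>2 * (\<Sum>i<?m. \<Sum>l<?m. (Xf Y n (Suc i) u * Xf Y n (Suc i + k) z) * (Xf Y n (Suc l) v * Xf Y n (Suc l + k) z))"
      by (simp only: sum_product)
    also have "\<dots> = (\<Sum>i<?m. \<Sum>l<?m.
      ((1 / real ?m)\<^sup>2 * (Xf Y n (Suc i) u * Xf Y n (Suc l) v)) * (Xf Y n (Suc i + k) z * Xf Y n (Suc l + k) z))"
      by (simp add: sum_distrib_left mult_ac)
    finally show ?thesis .
  qed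
  have ii: "\<And>i l. i < ?m \<Longrightarrow> l < ?m \<Longrightarrow> integrable (lebesgue_on I) (\<lambda>z. Xf Y n (Suc i + k) z * Xf Y n (Suc l + k) z)"
    using k hp by (intro int_XX) auto
  have "(LINT z|lebesgue_on I. Mhat I Y n p k u z * Mhat I Y n p k v z) =
     (\<Sum>i<?m. \<Sum>l<?m. ((1 / real ?m)\<^sup>2 * (Xf Y n (Suc i) u * Xf Y n (Suc l) v)) *
         (LINT z|lebesgue_on I. Xf Y n (Suc i + k) z * Xf Y n (Suc l + k) z))"
    unfolding pr
    by (rule int_double_sum) (rule ii; simp)
  also have "\<dots> = (\<Sum>i<?m. \<Sum>l<?m.
      ((1 / real ?m)\<^sup>2 * (Xf Y n (Suc i) u * Xf Y n (Suc l) v)) * Gmat I Y n p k $$ (i, l))"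
    by (intro sum.cong refl) (simp add: Gmat_idx inner_L2_def)
  finally show "(LINT z|lebesgue_on I. Mhat I Y n p k u z * Mhat I Y n p k v z) = \<dots>" .
qed


lemma kop_eq:
  assumes gi: "\<And>l. l < n - p \<Longrightarrow> integrable (lebesgue_on I) (\<lambda>v. Xf Y n (Suc l) v * g v)"
  shows "kop I (Khat I Y n p) g u = (\<Sum>i<n-p. Xf Y n (Suc i) u * ((1 / real (n-p))\<^sup>2 *
     (\<Sum>k\<in>{1..p}. \<Sum>l<n-p. Gmat I Y n p k $$ (i, l) * inner_L2 I (Xf Y n (Suc l)) g)))"
proof -
  let ?m = "n - p" and ?c = "(1 / real (n-p))\<^sup>2" and ?G = "Gmat I Y n p"
  have e: "Khat I Y n p u v * g v = (\<Sum>k\<in>{1..p}. \<Sum>i<?m. \<Sum>l<?m.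
      (?c * Xf Y n (Suc i) u * ?G k $$ (i, l)) * (Xf Y n (Suc l) v * g v))" for v
    unfolding Khat_eq by (simp add: sum_distrib_left sum_distrib_right mult_ac)
  have "kop I (Khat I Y n p) g u = (\<Sum>k\<in>{1..p}. integral\<^sup>L (lebesgue_on I) (\<lambda>v. \<Sum>i<?m. \<Sum>l<?m.
      (?c * Xf Y n (Suc i) u * ?G k $$ (i, l)) * (Xf Y n (Suc l) v * g v)))"
    unfolding kop_def e
    by (rule Bochner_Integration.integral_sum) (auto intro!: integrable_sum integrable_mult_right gi)
  also have "\<dots> = (\<Sum>k\<in>{1..p}. \<Sum>i<?m. \<Sum>l<?m.
      (?c * Xf Y n (Suc i) u * ?G k $$ (i, l)) * inner_L2 I (Xf Y n (Suc l)) g)"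
    unfolding inner_L2_def
    by (intro sum.cong refl int_double_sum gi) simp
  also have "\<dots> = (\<Sum>i<?m. \<Sum>k\<in>{1..p}. \<Sum>l<?m.
      (?c * Xf Y n (Suc i) u * ?G k $$ (i, l)) * inner_L2 I (Xf Y n (Suc l)) g)"
    by (rule sum.swap)
  also have "\<dots> = (\<Sum>i<n-p. Xf Y n (Suc i) u * ((1 / real (n-p))\<^sup>2 *
     (\<Sum>k\<in>{1..p}. \<Sum>l<n-p. Gmat I Y n p k $$ (i, l) * inner_L2 I (Xf Y n (Suc l)) g)))"
    by (simp add: sum_distrib_left mult_ac)
  finally show ?thesis .
qed

lemma Kstar_mult:
  assumes "\<gamma> \<in> carrier_vec (n - p)" "i < n - p"
  shows "(Kstar I Y n p *\<^sub>v \<gamma>) $ i = (1 / real (n-p))\<^sup>2 *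
     (\<Sum>k\<in>{1..p}. \<Sum>l<n-p. Gmat I Y n p k $$ (i, l) * (\<Sum>j<n-p. Gmat I Y n p 0 $$ (l, j) * \<gamma> $ j))"
proof -
  let ?m = "n - p" and ?c = "(1 / real (n-p))\<^sup>2" and ?G = "Gmat I Y n p"
  have dG: "dim_row (?G k) = ?m" "dim_col (?G k) = ?m" for k by (simp_all add: Gmat_def)
  have Ke: "Kstar I Y n p $$ (i, j) = ?c * (\<Sum>k\<in>{1..p}. \<Sum>l<?m. ?G k $$ (i, l) * ?G 0 $$ (l, j))"
    if "j < ?m" for j
    using that assms(2) by (simp add: Kstar_def dG scalar_prod_def atLeast0LessThan power_one_over)
  have "(Kstar I Y n p *\<^sub>v \<gamma>) $ i = (\<Sum>j<?m. Kstar I Y n p $$ (i, j) * \<gamma> $ j)"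
    using assms by (simp add: Kstar_def scalar_prod_def atLeast0LessThan)
  also have "\<dots> = (\<Sum>j<?m. ?c * (\<Sum>k\<in>{1..p}. \<Sum>l<?m. ?G k $$ (i, l) * ?G 0 $$ (l, j) * \<gamma> $ j))"
    by (intro sum.cong refl) (simp add: Ke sum_distrib_right)
  also have "\<dots> = ?c * (\<Sum>j<?m. \<Sum>k\<in>{1..p}. \<Sum>l<?m. ?G k $$ (i, l) * ?G 0 $$ (l, j) * \<gamma> $ j)"
    by (simp add: sum_distrib_left)
  also have "(\<Sum>j<?m. \<Sum>k\<in>{1..p}. \<Sum>l<?m. ?G k $$ (i, l) * ?G 0 $$ (l, j) * \<gamma> $ j)
     = (\<Sum>k\<in>{1..p}. \<Sum>j<?m. \<Sum>l<?m. ?G k $$ (i, l) * ?G 0 $$ (l, j) * \<gamma> $ j)"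
    by (rule sum.swap)
  also have "\<dots> = (\<Sum>k\<in>{1..p}. \<Sum>l<?m. \<Sum>j<?m. ?G k $$ (i, l) * ?G 0 $$ (l, j) * \<gamma> $ j)"
    by (intro sum.cong refl sum.swap)
  also have "\<dots> = (\<Sum>k\<in>{1..p}. \<Sum>l<?m. ?G k $$ (i, l) * (\<Sum>j<?m. ?G 0 $$ (l, j) * \<gamma> $ j))"
    by (simp add: sum_distrib_left mult_ac)
  finally show ?thesis .
qed


lemma dimK: "dim_row (Kstar I Y n p) = n - p" "dim_col (Kstar I Y n p) = n - p"
  by (simp_all add: Kstar_def)

lemma L2_comb: "L2M (lebesgue_on I) (\<lambda>u. \<Sum>j<n-p. c j * Xf Y n (Suc j) u)"
  using hp by (intro L2M_sum L2M_scale L2_X) auto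

lemma inner_comb: assumes "l < n - p"
  shows "inner_L2 I (Xf Y n (Suc l)) (\<lambda>u. \<Sum>j<n-p. c j * Xf Y n (Suc j) u)
     = (\<Sum>j<n-p. Gmat I Y n p 0 $$ (l, j) * c j)"
proof -
  have "inner_L2 I (Xf Y n (Suc l)) (\<lambda>u. \<Sum>j<n-p. c j * Xf Y n (Suc j) u)
     = integral\<^sup>L (lebesgue_on I) (\<lambda>u. \<Sum>j<n-p. c j * (Xf Y n (Suc l) u * Xf Y n (Suc j) u))"
    unfolding inner_L2_def by (simp add: sum_distrib_left mult_ac)
  also have "\<dots> = (\<Sum>j<n-p. integral\<^sup>L (lebesgue_on I) (\<lambda>u. c j * (Xf Y n (Suc l) u * Xf Y n (Suc j) u)))"
    using assms hp by (intro Bochner_Integration.integral_sum integrable_mult_right int_XX) auto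
  also have "\<dots> = (\<Sum>j<n-p. Gmat I Y n p 0 $$ (l, j) * c j)"
    using assms by (intro sum.cong refl) (simp add: Gmat_idx inner_L2_def mult_ac)
  finally show ?thesis .
qed

lemma part2:
  assumes th: "\<theta> \<noteq> 0" and ev: "eigenvector (Kstar I Y n p) \<gamma> \<theta>"
  shows "L2_on I (\<lambda>u. \<Sum>j<n-p. \<gamma> $ j * Xf Y n (Suc j) u)
     \<and> \<not> (AE u in lebesgue_on I. (\<Sum>j<n-p. \<gamma> $ j * Xf Y n (Suc j) u) = 0)
     \<and> (\<forall>u. kop I (Khat I Y n p) (\<lambda>u. \<Sum>j<n-p. \<gamma> $ j * Xf Y n (Suc j) u) u
            = \<theta> * (\<Sum>j<n-p. \<gamma> $ j * Xf Y n (Suc j) u))"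
proof -
  let ?m = "n - p" and ?K = "Kstar I Y n p" and ?G = "Gmat I Y n p"
  define \<psi> where "\<psi> = (\<lambda>u. \<Sum>j<n-p. \<gamma> $ j * Xf Y n (Suc j) u)"
  have gc: "\<gamma> \<in> carrier_vec ?m" and g0: "\<gamma> \<noteq> 0\<^sub>v ?m" and Kg: "?K *\<^sub>v \<gamma> = \<theta> \<cdot>\<^sub>v \<gamma>"
    using ev by (auto simp: eigenvector_def dimK)
  have dg: "dim_vec \<gamma> = ?m" using gc by auto
  have Kgi: "(?K *\<^sub>v \<gamma>) $ i = \<theta> * \<gamma> $ i" if "i < ?m" for i
    using that dg by (simp add: Kg)
  have L2p: "L2M (lebesgue_on I) \<psi>" unfolding \<psi>_def by (rule L2_comb)
  have gi: "integrable (lebesgue_on I) (\<lambda>v. Xf Y n (Suc l) v * \<psi> v)" if "l < ?m" for l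
    using that hp by (intro L2M_prod_int L2_X L2p) auto
  have w: "inner_L2 I (Xf Y n (Suc l)) \<psi> = (\<Sum>j<?m. ?G 0 $$ (l, j) * \<gamma> $ j)" if "l < ?m" for l
    unfolding \<psi>_def using that by (rule inner_comb)
  have kop: "kop I (Khat I Y n p) \<psi> u = \<theta> * \<psi> u" for u
  proof -
    have "kop I (Khat I Y n p) \<psi> u = (\<Sum>i<?m. Xf Y n (Suc i) u * ((1 / real ?m)\<^sup>2 *
       (\<Sum>k\<in>{1..p}. \<Sum>l<?m. ?G k $$ (i, l) * inner_L2 I (Xf Y n (Suc l)) \<psi>)))"
      by (rule kop_eq) (rule gi)
    also have "\<dots> = (\<Sum>i<?m. Xf Y n (Suc i) u * (?K *\<^sub>v \<gamma>) $ i)"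
      by (intro sum.cong refl) (simp add: w Kstar_mult[OF gc])
    also have "\<dots> = \<theta> * \<psi> u"
      unfolding \<psi>_def by (simp add: Kgi sum_distrib_left mult_ac)
    finally show ?thesis .
  qed
  have nz: "\<not> (AE u in lebesgue_on I. \<psi> u = 0)"
  proof
    assume ae: "AE u in lebesgue_on I. \<psi> u = 0"
    have w0: "(\<Sum>j<?m. ?G 0 $$ (l, j) * \<gamma> $ j) = 0" if "l < ?m" for l
    proof -
      have "AE u in lebesgue_on I. Xf Y n (Suc l) u * \<psi> u = 0"
        using ae by eventually_elim simp
      hence "inner_L2 I (Xf Y n (Suc l)) \<psi> = 0" unfolding inner_L2_def by (rule integral_eq_zero_AE)
      thus ?thesis using w[OF that] by simp
    qed
    have "\<gamma> = 0\<^sub>v ?m"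
    proof (rule eq_vecI)
      fix i assume "i < dim_vec (0\<^sub>v ?m :: real vec)"
      hence i: "i < ?m" by simp
      have "\<theta> * \<gamma> $ i = 0" using Kgi[OF i] Kstar_mult[OF gc i] w0 by simp
      thus "\<gamma> $ i = 0\<^sub>v ?m $ i" using th i by simp
    qed (simp add: dg)
    thus False using g0 by simp
  qed
  show ?thesis using L2p nz kop unfolding \<psi>_def by (simp add: L2_on_eq)
qed

lemma part1:
  assumes th: "\<theta> \<noteq> 0" and op: "op_eigenvalue I (Khat I Y n p) \<theta>"
  shows "eigenvalue (Kstar I Y n p) \<theta>"
proof -
  let ?m = "n - p" and ?K = "Kstar I Y n p" and ?G = "Gmat I Y n p"
  obtain g where L2g: "L2_on I g" and nz: "\<not> (AE x in lebesgue_on I. g x = 0)"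
    and ae: "AE u in lebesgue_on I. kop I (Khat I Y n p) g u = \<theta> * g u"
    using op unfolding op_eigenvalue_def by blast
  have L2g': "L2M (lebesgue_on I) g" using L2g by (simp add: L2_on_eq)
  have gi: "integrable (lebesgue_on I) (\<lambda>v. Xf Y n (Suc l) v * g v)" if "l < ?m" for l
    using that hp by (intro L2M_prod_int L2_X L2g') auto
  define w where "w l = inner_L2 I (Xf Y n (Suc l)) g" for l
  define cv where "cv i = (1 / real ?m)\<^sup>2 * (\<Sum>k\<in>{1..p}. \<Sum>l<?m. ?G k $$ (i, l) * w l)" for i
  define \<gamma> where "\<gamma> = vec ?m (\<lambda>i. cv i / \<theta>)"
  define \<psi> where "\<psi> = (\<lambda>u. \<Sum>j<n-p. \<gamma> $ j * Xf Y n (Suc j) u)"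
  have gc: "\<gamma> \<in> carrier_vec ?m" unfolding \<gamma>_def by simp
  have kop: "kop I (Khat I Y n p) g u = (\<Sum>i<?m. Xf Y n (Suc i) u * cv i)" for u
    unfolding cv_def w_def by (rule kop_eq) (rule gi)
  have psi_eq: "\<psi> u = (\<Sum>i<?m. Xf Y n (Suc i) u * cv i) / \<theta>" for u
    unfolding \<psi>_def \<gamma>_def by (simp add: sum_divide_distrib mult_ac)
  have aeg: "AE u in lebesgue_on I. g u = \<psi> u"
    using ae
  proof eventually_elim
    case (elim u)
    thus ?case using th by (simp add: psi_eq kop)
  qed
  have L2p: "L2M (lebesgue_on I) \<psi>" unfolding \<psi>_def by (rule L2_comb)
  have wl: "w l = (\<Sum>j<?m. ?G 0 $$ (l, j) * \<gamma> $ j)" if l: "l < ?m" for l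
  proof -
    have "w l = inner_L2 I (Xf Y n (Suc l)) \<psi>"
      unfolding w_def inner_L2_def
    proof (rule integral_cong_AE)
      show "(\<lambda>x. Xf Y n (Suc l) x * g x) \<in> borel_measurable (lebesgue_on I)"
        using gi[OF l] by (rule borel_measurable_integrable)
      show "(\<lambda>x. Xf Y n (Suc l) x * \<psi> x) \<in> borel_measurable (lebesgue_on I)"
        using l hp by (intro borel_measurable_integrable L2M_prod_int L2_X L2p) auto
      show "AE x in lebesgue_on I. Xf Y n (Suc l) x * g x = Xf Y n (Suc l) x * \<psi> x"
        using aeg by eventually_elim simp
    qed
    also have "\<dots> = (\<Sum>j<?m. ?G 0 $$ (l, j) * \<gamma> $ j)"
      unfolding \<psi>_def using l by (rule inner_comb)
    finally show ?thesis .
  qed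
  have Kv: "?K *\<^sub>v \<gamma> = \<theta> \<cdot>\<^sub>v \<gamma>"
  proof (rule eq_vecI)
    fix i assume "i < dim_vec (\<theta> \<cdot>\<^sub>v \<gamma>)"
    hence i: "i < ?m" using gc by simp
    have "(?K *\<^sub>v \<gamma>) $ i = cv i"
      unfolding Kstar_mult[OF gc i] cv_def by (simp add: wl)
    also have "\<dots> = \<theta> * \<gamma> $ i" using th i unfolding \<gamma>_def by simp
    finally show "(?K *\<^sub>v \<gamma>) $ i = (\<theta> \<cdot>\<^sub>v \<gamma>) $ i" using i gc by simp
  qed (use gc dimK in simp)
  have g0: "\<gamma> \<noteq> 0\<^sub>v ?m"
  proof
    assume "\<gamma> = 0\<^sub>v ?m"
    hence "\<psi> u = 0" for u unfolding \<psi>_def by simp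
    hence "AE u in lebesgue_on I. g u = 0" using aeg by simp
    thus False using nz by simp
  qed
  have "eigenvector ?K \<gamma> \<theta>"
    unfolding eigenvector_def using gc g0 Kv by (simp add: dimK)
  thus ?thesis unfolding eigenvalue_def by blast
qed

end

theorem proposition2:
  fixes Y :: "nat \<Rightarrow> real \<Rightarrow> real" and a b :: real and n p :: nat
  assumes "\<forall>j\<in>{1..n}. L2_on {a..b} (Y j)"
    and "1 \<le> p" and "p < n"
  shows "(\<forall>\<theta>. \<theta> \<noteq> 0 \<longrightarrow>
            (op_eigenvalue {a..b} (Khat {a..b} Y n p) \<theta> \<longleftrightarrow> eigenvalue (Kstar {a..b} Y n p) \<theta>))
       \<and> (\<forall>\<theta> \<gamma>. \<theta> \<noteq> 0 \<longrightarrow> eigenvector (Kstar {a..b} Y n p) \<gamma> \<theta> \<longrightarrow>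
            (let \<psi> = (\<lambda>u. \<Sum>t=1..n-p. (\<gamma> $ (t - 1)) * (Y t u - Ybar Y n u))
             in L2_on {a..b} \<psi> \<and> \<not> (AE u in lebesgue_on {a..b}. \<psi> u = 0)
                \<and> (\<forall>u\<in>{a..b}. kop {a..b} (Khat {a..b} Y n p) \<psi> u = \<theta> * \<psi> u)))"
proof -
  let ?I = "{a..b}"
  have psi: "(\<lambda>u. \<Sum>t=1..n-p. (\<gamma> $ (t - 1)) * (Y t u - Ybar Y n u)) = (\<lambda>u. \<Sum>j<n-p. \<gamma> $ j * Xf Y n (Suc j) u)"
    for \<gamma> :: "real vec"
    unfolding sum_shift1 Xf_def by simp
  have P2: "\<forall>\<theta> \<gamma>. \<theta> \<noteq> 0 \<longrightarrow> eigenvector (Kstar ?I Y n p) \<gamma> \<theta> \<longrightarrow>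
            (let \<psi> = (\<lambda>u. \<Sum>t=1..n-p. (\<gamma> $ (t - 1)) * (Y t u - Ybar Y n u))
             in L2_on ?I \<psi> \<and> \<not> (AE u in lebesgue_on ?I. \<psi> u = 0)
                \<and> (\<forall>u\<in>?I. kop ?I (Khat ?I Y n p) \<psi> u = \<theta> * \<psi> u))"
  proof (intro allI impI)
    fix \<theta> :: real and \<gamma> assume th: "\<theta> \<noteq> 0" and ev: "eigenvector (Kstar ?I Y n p) \<gamma> \<theta>"
    note r = part2[OF assms(1) assms(3) th ev]
    show "let \<psi> = (\<lambda>u. \<Sum>t=1..n-p. (\<gamma> $ (t - 1)) * (Y t u - Ybar Y n u))
             in L2_on ?I \<psi> \<and> \<not> (AE u in lebesgue_on ?I. \<psi> u = 0)
                \<and> (\<forall>u\<in>?I. kop ?I (Khat ?I Y n p) \<psi> u = \<theta> * \<psi> u)"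
      unfolding psi Let_def using r by simp
  qed
  have P1: "\<forall>\<theta>. \<theta> \<noteq> 0 \<longrightarrow>
            (op_eigenvalue ?I (Khat ?I Y n p) \<theta> \<longleftrightarrow> eigenvalue (Kstar ?I Y n p) \<theta>)"
  proof (intro allI impI iffI)
    fix \<theta> :: real assume "\<theta> \<noteq> 0" "op_eigenvalue ?I (Khat ?I Y n p) \<theta>"
    thus "eigenvalue (Kstar ?I Y n p) \<theta>" by (rule part1[OF assms(1) assms(3)])
  next
    fix \<theta> :: real assume th: "\<theta> \<noteq> 0" and "eigenvalue (Kstar ?I Y n p) \<theta>"
    then obtain \<gamma> where ev: "eigenvector (Kstar ?I Y n p) \<gamma> \<theta>" unfolding eigenvalue_def by blast
    from part2[OF assms(1) assms(3) th ev] show "op_eigenvalue ?I (Khat ?I Y n p) \<theta>"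
      unfolding op_eigenvalue_def
      by (intro exI[of _ "\<lambda>u. \<Sum>j<n-p. \<gamma> $ j * Xf Y n (Suc j) u"] conjI AE_I2) (simp_all only: simp_thms)
  qed
  show ?thesis using P1 P2 by blast
qed

end
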